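(* Fix $m\le n$. There is a unique bijection $\phi_m$ between the set of complete $m$-chains of $\Pi(n)$ and the set of ordered $(m,n)$-forests that sends a chain $C$ with top element $P$ and Jordan-Hölder permutation $\lambda$ to an ordered forest with priority forest $P$ and priority traversal $\lambda^{-1}$. The bijection $\phi_m$ is explicitly defined as $\phi_m(C) = \lambda^{-1}(P)$.
   Context: An ordered $(m,n)$-forest is a rooted forest with $n+1$ nodes and $m$ edges whose component trees $T_0,\dots,T_{n-m}$ are totally ordered, with roots marked $\circ,\circ_1,\dots,\circ_{n-m}$ recording the order, and whose $m$ non-root vertices are labeled by $[m]=\{1,\dots,m\}$. The priority-first search on an ordered forest starts with only the children of $\circ$ unblocked; at each step it visits the unblocked node with smallest label and unblocks its children; when a component tree is exhausted it moves to the next tree, reads its root and unblocks the root's children. The priority traversal of the forest is the resulting sequence of visited nodes (the initial root $\circ$ is not recorded, and the other roots are recorded as $-$), a partial permutation. The priority forest of an ordered forest is obtained by relabeling its nodes in the order they are visited by priority search, with $\circ$ labeled $0$. In general, a priority forest labeled with $\{0,1,\dots,n\}$ is a rooted forest $(T_0,\dots,T_{n-m})$ whose component trees are increasing and ordered by root labels, such that for $j<k$ every label of $T_j$ is smaller than every label of $T_k$. The priority lattice $\Pi(n)$ consists of all priority forests labeled with $\{0,1,\dots,n\}$ together with an extra top element $\hat 1$, ordered by inclusion of edge sets for priority forests; its bottom element $\hat 0$ is the edgeless forest. For a cover relation $P'\lessdot P$ between priority forests, the edge label $\lambda(P',P)$ is the larger endpoint of the unique edge in $E(P)\setminus E(P')$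 (covers involving $\hat 1$ are unlabeled). A complete $m$-chain is a saturated chain $C:\hat 0=P_0\lessdot P_1\lessdot\cdots\lessdot P_m=P$ of length $m$ starting at $\hat 0$; its Jordan-Hölder permutation is $\lambda(C)=(\lambda(P_0,P_1),\dots,\lambda(P_{m-1},P_m))$, a partial permutation. For such $C$ with top element $P$, $\lambda^{-1}(P)$ denotes the ordered forest obtained by relabeling the non-root vertices of $P$ according to the partial permutation $\lambda(C)^{-1}$ and recording the relative order of the roots in the subscripts of the $\circ$'s. *)

theory Defs
  imports Main
begin

text \<open>Vertices of an ordered forest: roots Rt 0 (the root written o), Rt j (the root o_j),
  and non-root vertices Lb i with labels i in {1..m}.\<close>
datatype overt = Rt nat | Lb nat

text \<open>An ordered forest is given by its parent map on the labels {1..m}.\<close>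
type_synonym oforest = "nat \<Rightarrow> overt option"

definition ordered_forests :: "nat \<Rightarrow> nat \<Rightarrow> oforest set" where
  "ordered_forests m n =
     {F. dom F = {1..m}
       \<and> ran F \<subseteq> Rt ` {0..n - m} \<union> Lb ` {1..m}
       \<and> acyclic {(Lb i, v) | i v. F i = Some v}}"

definition ochildren :: "oforest \<Rightarrow> overt \<Rightarrow> nat set" where
  "ochildren F v = {i. F i = Some v}"

text \<open>Arguments: forest, number r of extra roots, fuel,
  index j of the current tree, set U of unblocked labels. Output: the traversal,
  with Some i for a visited label i and None for a visited root (written -).\<close>
fun ptrav_aux :: "oforest \<Rightarrow> nat \<Rightarrow> nat \<Rightarrow> nat \<Rightarrow> nat set \<Rightarrow> nat option list" where
  "ptrav_aux F r 0 j U = []"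
| "ptrav_aux F r (Suc k) j U =
     (if U \<noteq> {} then
        Some (Min U) # ptrav_aux F r k j (U - {Min U} \<union> ochildren F (Lb (Min U)))
      else if j < r then
        None # ptrav_aux F r k (Suc j) (ochildren F (Rt (Suc j)))
      else [])"

definition priority_traversal :: "nat \<Rightarrow> nat \<Rightarrow> oforest \<Rightarrow> nat option list" where
  "priority_traversal m n F = ptrav_aux F (n - m) n 0 (ochildren F (Rt 0))"

text \<open>Position (new label) of a vertex in the order of visit; the root o gets 0.\<close>
definition visit_pos :: "nat option list \<Rightarrow> overt \<Rightarrow> nat" where
  "visit_pos t v = (case v of
      Lb i \<Rightarrow> Suc (THE k. k < length t \<and> t ! k = Some i)
    | Rt j \<Rightarrow> (if j = 0 then 0 else
        Suc (THE k. k < length t \<and> t ! k = None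
                  \<and> length (filter (\<lambda>x. x = None) (take (Suc k) t)) = j)))"

text \<open>Priority forest of an ordered forest, as a set of edges (parent, child) on {0..n}.\<close>
definition priority_forest_of :: "nat \<Rightarrow> nat \<Rightarrow> oforest \<Rightarrow> (nat \<times> nat) set" where
  "priority_forest_of m n F =
     (let t = priority_traversal m n F
      in {(visit_pos t v, visit_pos t (Lb i)) | i v. F i = Some v})"

definition pf_root :: "(nat \<times> nat) set \<Rightarrow> nat \<Rightarrow> bool" where
  "pf_root E r \<longleftrightarrow> \<not> (\<exists>a. (a, r) \<in> E)"

definition priority_forest :: "nat \<Rightarrow> (nat \<times> nat) set \<Rightarrow> bool" where
  "priority_forest n E \<longleftrightarrow>
     E \<subseteq> {0..n} \<times> {0..n}
   \<and> (\<forall>(a, b) \<in> E. a < b)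
   \<and> (\<forall>a a' b. (a, b) \<in> E \<longrightarrow> (a', b) \<in> E \<longrightarrow> a = a')
   \<and> (\<forall>x \<in> {0..n}. \<forall>y \<in> {0..n}. \<forall>rx \<in> {0..n}. \<forall>ry \<in> {0..n}.
        pf_root E rx \<and> (rx, x) \<in> E\<^sup>* \<and> pf_root E ry \<and> (ry, y) \<in> E\<^sup>* \<and> rx < ry
        \<longrightarrow> x < y)"

text \<open>Cover relation between priority forests in Pi(n) (the top element 1 is never
  strictly between two priority forests, so it may be ignored here).\<close>
definition pf_cover :: "nat \<Rightarrow> (nat \<times> nat) set \<Rightarrow> (nat \<times> nat) set \<Rightarrow> bool" where
  "pf_cover n P' P \<longleftrightarrow> priority_forest n P' \<and> priority_forest n P \<and> P' \<subset> P
     \<and> \<not> (\<exists>Q. priority_forest n Q \<and> P' \<subset> Q \<and> Q \<subset> P)"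

definition edge_label :: "(nat \<times> nat) set \<Rightarrow> (nat \<times> nat) set \<Rightarrow> nat" where
  "edge_label P' P = snd (the_elem (P - P'))"

definition complete_chains :: "nat \<Rightarrow> nat \<Rightarrow> (nat \<times> nat) set list set" where
  "complete_chains n m =
     {C. length C = Suc m \<and> C ! 0 = {} \<and> (\<forall>P \<in> set C. priority_forest n P)
       \<and> (\<forall>i < m. pf_cover n (C ! i) (C ! Suc i))}"

definition jh_perm :: "(nat \<times> nat) set list \<Rightarrow> nat list" where
  "jh_perm C = map (\<lambda>i. edge_label (C ! i) (C ! Suc i)) [0..<length C - 1]"

text \<open>Inverse of a partial permutation lam = (lam_1,...,lam_m) (injective word over [n]),
  as a word of length n over [m] plus None (for -).\<close>
definition inv_pperm :: "nat \<Rightarrow> nat list \<Rightarrow> nat option list" where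
  "inv_pperm n lam =
     map (\<lambda>k. if k \<in> set lam then Some (Suc (THE i. i < length lam \<and> lam ! i = k)) else None)
         [1..<Suc n]"

text \<open>Relabel vertex v of P according to the word w = lam^{-1}: non-roots get labels,
  0 becomes the root o, other roots become o_j by relative order.\<close>
definition relabel_vertex :: "nat option list \<Rightarrow> nat \<Rightarrow> overt" where
  "relabel_vertex w v = (if v = 0 then Rt 0 else
      (case w ! (v - 1) of
         Some i \<Rightarrow> Lb i
       | None \<Rightarrow> Rt (length (filter (\<lambda>x. x = None) (take v w)))))"

definition phi_chain :: "nat \<Rightarrow> (nat \<times> nat) set list \<Rightarrow> oforest" where
  "phi_chain n C =
     (let P = last C; lam = jh_perm C; w = inv_pperm n lam
      in (\<lambda>i. if i \<in> {1..length lam}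
               then Some (relabel_vertex w (THE p. (p, lam ! (i - 1)) \<in> P))
               else None))"

end

theory Submission
  imports Defs
begin


definition pf_local :: "nat \<Rightarrow> (nat \<times> nat) set \<Rightarrow> bool" where
  "pf_local n E \<longleftrightarrow> E \<subseteq> {0..n} \<times> {0..n} \<and> (\<forall>(a, b) \<in> E. a < b)
   \<and> (\<forall>a a' b. (a, b) \<in> E \<longrightarrow> (a', b) \<in> E \<longrightarrow> a = a')
   \<and> (\<forall>a b x. (a, b) \<in> E \<longrightarrow> a < x \<longrightarrow> x \<le> b \<longrightarrow> (\<exists>c. (c, x) \<in> E))"

lemma pf_sub: "pf_local n E \<Longrightarrow> (a, b) \<in> E \<Longrightarrow> a \<le> n \<and> b \<le> n"
  unfolding pf_local_def by auto
lemma pf_inc: "pf_local n E \<Longrightarrow> (a, b) \<in> E \<Longrightarrow> a < b"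
  unfolding pf_local_def by auto
lemma pf_up: "pf_local n E \<Longrightarrow> (a, b) \<in> E \<Longrightarrow> (a', b) \<in> E \<Longrightarrow> a = a'"
  unfolding pf_local_def by blast
lemma pf_loc: "pf_local n E \<Longrightarrow> (a, b) \<in> E \<Longrightarrow> a < x \<Longrightarrow> x \<le> b \<Longrightarrow> \<exists>c. (c, x) \<in> E"
  unfolding pf_local_def by blast

lemma rtrancl_le:
  assumes "\<forall>(a, b) \<in> E. a < b" "(x, y) \<in> E\<^sup>*"
  shows "x \<le> (y::nat)"
  using assms(2) by induct (use assms(1) in auto)

lemma root_exists:
  assumes "\<forall>(a, b) \<in> E. a < b"
  shows "\<exists>r. pf_root E r \<and> (r, (x::nat)) \<in> E\<^sup>*"
proof (induction x rule: less_induct)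
  case (less x)
  show ?case
  proof (cases "pf_root E x")
    case True then show ?thesis by auto
  next
    case False
    then obtain c where c: "(c, x) \<in> E" unfolding pf_root_def by auto
    with assms have "c < x" by auto
    with less obtain r where "pf_root E r" "(r, c) \<in> E\<^sup>*" by auto
    with c show ?thesis by (meson rtrancl.rtrancl_into_rtrancl)
  qed
qed

lemma rtrancl_nonroot:
  assumes loc: "\<forall>a b x. (a, b) \<in> E \<longrightarrow> a < x \<longrightarrow> x \<le> b \<longrightarrow> (\<exists>c. (c, x) \<in> E)"
    and "(r, x) \<in> E\<^sup>*"
  shows "\<forall>z. r < z \<longrightarrow> z \<le> (x::nat) \<longrightarrow> (\<exists>c. (c, z) \<in> E)"
  using assms(2)
proof induct
  case base then show ?case by auto
next
  case (step y x)
  show ?case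
  proof (intro allI impI)
    fix z assume "r < z" "z \<le> x"
    show "\<exists>c. (c, z) \<in> E"
    proof (cases "z \<le> y")
      case True with step \<open>r < z\<close> show ?thesis by auto
    next
      case False with loc step(2) \<open>z \<le> x\<close> show ?thesis by auto
    qed
  qed
qed

lemma pf_iff_local: "priority_forest n E \<longleftrightarrow> pf_local n E"
proof
  assume pf: "priority_forest n E"
  then have sub: "E \<subseteq> {0..n} \<times> {0..n}" and inc: "\<forall>(a, b) \<in> E. a < b"
    and up: "\<forall>a a' b. (a, b) \<in> E \<longrightarrow> (a', b) \<in> E \<longrightarrow> a = a'"
    and tr: "\<forall>x \<in> {0..n}. \<forall>y \<in> {0..n}. \<forall>rx \<in> {0..n}. \<forall>ry \<in> {0..n}.
        pf_root E rx \<and> (rx, x) \<in> E\<^sup>* \<and> pf_root E ry \<and> (ry, y) \<in> E\<^sup>* \<and> rx < ry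
        \<longrightarrow> x < y"
    unfolding priority_forest_def by auto
  have "\<exists>c. (c, x) \<in> E" if ab: "(a, b) \<in> E" "a < x" "x \<le> b" for a b x
  proof (rule ccontr)
    assume nx: "\<not> (\<exists>c. (c, x) \<in> E)"
    then have rx: "pf_root E x" unfolding pf_root_def by auto
    obtain ra where ra: "pf_root E ra" "(ra, a) \<in> E\<^sup>*" using root_exists[OF inc] by blast
    have "ra \<le> a" using rtrancl_le[OF inc ra(2)] .
    have rb: "(ra, b) \<in> E\<^sup>*" using ra(2) ab(1) by (meson rtrancl.rtrancl_into_rtrancl)
    have bn: "b \<le> n" using sub ab(1) by auto
    have "b < x"
      using tr[rule_format, of b x ra x] rx ra rb \<open>ra \<le> a\<close> ab bn by auto
    with ab show False by auto
  qed
  then show "pf_local n E" using sub inc up unfolding pf_local_def by blast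
next
  assume loc: "pf_local n E"
  then have sub: "E \<subseteq> {0..n} \<times> {0..n}" and inc: "\<forall>(a, b) \<in> E. a < b"
    and up: "\<forall>a a' b. (a, b) \<in> E \<longrightarrow> (a', b) \<in> E \<longrightarrow> a = a'"
    and lc: "\<forall>a b x. (a, b) \<in> E \<longrightarrow> a < x \<longrightarrow> x \<le> b \<longrightarrow> (\<exists>c. (c, x) \<in> E)"
    unfolding pf_local_def by auto
  have "x < y" if th: "pf_root E rx" "(rx, x) \<in> E\<^sup>*" "pf_root E ry" "(ry, y) \<in> E\<^sup>*" "rx < ry"
    for x y rx ry
  proof (rule ccontr)
    assume "\<not> x < y"
    moreover have "ry \<le> y" using rtrancl_le[OF inc th(4)] .
    ultimately have "rx < ry" "ry \<le> x" using th by auto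
    then obtain c where "(c, ry) \<in> E" using rtrancl_nonroot[OF lc th(2)] by blast
    with th(3) show False unfolding pf_root_def by auto
  qed
  then show "priority_forest n E" unfolding priority_forest_def using sub inc up by blast
qed

lemma cover_single:
  assumes "pf_cover n P' P"
  shows "\<exists>e. e \<notin> P' \<and> P = insert e P'"
proof -
  have pf': "pf_local n P'" and pf: "pf_local n P" and ss: "P' \<subset> P"
    and nq: "\<not> (\<exists>Q. priority_forest n Q \<and> P' \<subset> Q \<and> Q \<subset> P)"
    using assms unfolding pf_cover_def pf_iff_local by auto
  define D where "D = P - P'"
  have "\<exists>b. \<exists>a. (a, b) \<in> D" using ss unfolding D_def by auto
  define b where "b = (LEAST b. \<exists>a. (a, b) \<in> D)"
  obtain a where ab: "(a, b) \<in> D" using LeastI_ex[OF \<open>\<exists>b. \<exists>a. (a, b) \<in> D\<close>] b_def by auto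
  have bmin: "b \<le> b'" if "(a', b') \<in> D" for a' b'
    unfolding b_def by (rule Least_le) (use that in auto)
  define Q where "Q = insert (a, b) P'"
  have QP: "Q \<subseteq> P" using ab ss unfolding Q_def D_def by auto
  have "pf_local n Q"
    unfolding pf_local_def
  proof (intro conjI allI impI)
    show "Q \<subseteq> {0..n} \<times> {0..n}" using QP pf unfolding pf_local_def by auto
    show "\<forall>(x, y)\<in>Q. x < y" using QP pf unfolding pf_local_def by auto
    show "x = x'" if "(x, y) \<in> Q" "(x', y) \<in> Q" for x x' y
      using QP pf that unfolding pf_local_def by blast
    show "\<exists>c. (c, z) \<in> Q" if h: "(x, y) \<in> Q" "x < z" "z \<le> y" for x y z
    proof (cases "(x, y) \<in> P'")
      case True
      then obtain c where "(c, z) \<in> P'" using pf' h unfolding pf_local_def by blast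
      then show ?thesis unfolding Q_def by auto
    next
      case False
      then have xy: "x = a" "y = b" using h(1) unfolding Q_def by auto
      show ?thesis
      proof (cases "z = b")
        case True then show ?thesis unfolding Q_def by auto
      next
        case False
        then have "z < b" using h xy by auto
        obtain c where c: "(c, z) \<in> P" using pf h xy ab unfolding pf_local_def D_def by blast
        have "(c, z) \<in> P'"
        proof (rule ccontr)
          assume "(c, z) \<notin> P'"
          then have "(c, z) \<in> D" using c unfolding D_def by auto
          then show False using bmin \<open>z < b\<close> by fastforce
        qed
        then show ?thesis unfolding Q_def by auto
      qed
    qed
  qed
  then have "priority_forest n Q" using pf_iff_local by auto
  moreover have "P' \<subset> Q" using ab unfolding Q_def D_def by auto
  ultimately have "Q = P" using nq QP by auto
  then show ?thesis using ab unfolding Q_def D_def by auto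
qed

lemma single_cover:
  assumes "priority_forest n P'" "priority_forest n P" "e \<notin> P'" "P = insert e P'"
  shows "pf_cover n P' P"
  unfolding pf_cover_def using assms by auto


lemma chain_basic:
  assumes "C \<in> complete_chains n m"
  shows "length C = Suc m" "C!0 = {}" "\<And>k. k \<le> m \<Longrightarrow> priority_forest n (C!k)"
    "\<And>k. k < m \<Longrightarrow> pf_cover n (C!k) (C!Suc k)"
  using assms unfolding complete_chains_def by (auto simp: less_Suc_eq_le[symmetric])

lemma jh_length: "C \<in> complete_chains n m \<Longrightarrow> length (jh_perm C) = m"
  using chain_basic(1) unfolding jh_perm_def by auto

lemma jh_nth: "C \<in> complete_chains n m \<Longrightarrow> k < m \<Longrightarrow>
    jh_perm C ! k = edge_label (C!k) (C!Suc k)"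
  using chain_basic(1) unfolding jh_perm_def by auto

lemma chain_step:
  assumes "C \<in> complete_chains n m" "k < m"
  shows "\<exists>a. (a, jh_perm C ! k) \<notin> C!k \<and> C!Suc k = insert (a, jh_perm C ! k) (C!k)"
proof -
  obtain e where e: "e \<notin> C!k" "C!Suc k = insert e (C!k)"
    using cover_single[OF chain_basic(4)[OF assms]] by blast
  have "C!Suc k - C!k = {e}" using e by auto
  then have "jh_perm C ! k = snd e" using jh_nth[OF assms] unfolding edge_label_def by simp
  then show ?thesis using e by (metis prod.collapse)
qed

lemma chain_mono:
  assumes "C \<in> complete_chains n m" "k \<le> k'" "k' \<le> m"
  shows "C!k \<subseteq> C!k'"
  using assms(2,3)
proof (induction k')
  case 0 then show ?case by auto
next
  case (Suc k')
  show ?case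
  proof (cases "k = Suc k'")
    case True then show ?thesis by auto
  next
    case False
    then have "C!k \<subseteq> C!k'" using Suc by auto
    moreover obtain a where "C!Suc k' = insert (a, jh_perm C ! k') (C!k')"
      using chain_step[OF assms(1), of k'] Suc by auto
    ultimately show ?thesis by auto
  qed
qed

lemma chain_last: "C \<in> complete_chains n m \<Longrightarrow> last C = C!m"
  using chain_basic(1) by (metis diff_Suc_1 last_conv_nth list.size(3) nat.distinct(1))

lemma chain_last_pf: "C \<in> complete_chains n m \<Longrightarrow> pf_local n (last C)"
  using chain_last chain_basic(3) pf_iff_local by auto

lemma chain_C3:
  assumes "C \<in> complete_chains n m" "k \<le> m"
  shows "C!k = {(x, y) \<in> last C. y \<in> set (take k (jh_perm C))}"
  using assms(2)
proof (induction k)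
  case 0 then show ?case using chain_basic(2)[OF assms(1)] by auto
next
  case (Suc k)
  let ?lam = "jh_perm C"
  obtain a where a: "(a, ?lam ! k) \<notin> C!k" "C!Suc k = insert (a, ?lam ! k) (C!k)"
    using chain_step[OF assms(1), of k] Suc.prems by auto
  have "C!Suc k \<subseteq> C!m" using chain_mono[OF assms(1), of "Suc k" m] Suc.prems by simp
  then have inP: "(a, ?lam ! k) \<in> last C" using a(2) chain_last[OF assms(1)] by auto
  have up: "x = a" if "(x, ?lam ! k) \<in> last C" for x
    using pf_up[OF chain_last_pf[OF assms(1)] that inP] .
  have tk: "take (Suc k) ?lam = take k ?lam @ [?lam ! k]"
    using Suc.prems jh_length[OF assms(1)] by (simp add: take_Suc_conv_app_nth)
  have "{(x, y) \<in> last C. y \<in> set (take (Suc k) ?lam)} = insert (a, ?lam!k) {(x, y) \<in> last C. y \<in> set (take k ?lam)}"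
  proof (rule set_eqI)
    fix e :: "nat \<times> nat"
    obtain x y where e: "e = (x, y)" by fastforce
    have "x = a" if "y = ?lam ! k" "(x, y) \<in> last C" using up that by blast
    then show "e \<in> {(x, y) \<in> last C. y \<in> set (take (Suc k) ?lam)} \<longleftrightarrow> e \<in> insert (a, ?lam!k) {(x, y) \<in> last C. y \<in> set (take k ?lam)}"
      unfolding e tk using inP by auto
  qed
  then show ?case using Suc.IH Suc.prems a(2) by simp
qed

lemma jh_root:
  assumes "C \<in> complete_chains n m" "k < m"
  shows "(c, jh_perm C ! k) \<notin> C!k"
proof
  assume c: "(c, jh_perm C ! k) \<in> C!k"
  obtain a where a: "(a, jh_perm C ! k) \<notin> C!k" "C!Suc k = insert (a, jh_perm C ! k) (C!k)"
    using chain_step[OF assms] by auto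
  have "pf_local n (C!Suc k)" using chain_basic(3)[OF assms(1), of "Suc k"] assms pf_iff_local by auto
  then have "c = a" using a c pf_up[of n "C!Suc k" c "jh_perm C ! k" a] by blast
  then show False using a c by auto
qed

lemma jh_edge:
  assumes "C \<in> complete_chains n m" "k < m"
  shows "\<exists>a. (a, jh_perm C ! k) \<in> C!Suc k"
  using chain_step[OF assms] by auto

lemma jh_edge_last:
  assumes "C \<in> complete_chains n m" "k < m"
  shows "\<exists>a. (a, jh_perm C ! k) \<in> last C"
  using jh_edge[OF assms] chain_mono[OF assms(1), of "Suc k" m] assms chain_last[OF assms(1)] by auto

lemma jh_distinct:
  assumes "C \<in> complete_chains n m"
  shows "distinct (jh_perm C)"
proof -
  have "jh_perm C ! i \<noteq> jh_perm C ! j" if ij: "i < j" "j < m" for i j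
  proof
    assume eq: "jh_perm C ! i = jh_perm C ! j"
    obtain a where "(a, jh_perm C ! i) \<in> C!Suc i" using jh_edge[OF assms, of i] ij by auto
    then have "(a, jh_perm C ! j) \<in> C!j" using chain_mono[OF assms, of "Suc i" j] ij eq by auto
    then show False using jh_root[OF assms ij(2)] by auto
  qed
  then show ?thesis unfolding distinct_conv_nth jh_length[OF assms]
    by (metis linorder_neqE_nat)
qed

lemma jh_range:
  assumes "C \<in> complete_chains n m" "k < m"
  shows "jh_perm C ! k \<in> {1..n}"
proof -
  obtain a where a: "(a, jh_perm C ! k) \<in> last C" using jh_edge_last[OF assms] by auto
  then have "a < jh_perm C ! k" "jh_perm C ! k \<le> n"
    using pf_inc[OF chain_last_pf[OF assms(1)] a] pf_sub[OF chain_last_pf[OF assms(1)] a] by auto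
  then show ?thesis by simp
qed

lemma last_edges:
  assumes "C \<in> complete_chains n m" "(x, y) \<in> last C"
  shows "y \<in> set (jh_perm C)"
  using chain_C3[OF assms(1) order.refl] assms chain_last[OF assms(1)] jh_length[OF assms(1)] by auto


definition cntN :: "nat option list \<Rightarrow> nat" where
  "cntN xs = length (filter (\<lambda>x. x = None) xs)"

definition vis :: "nat option list \<Rightarrow> nat \<Rightarrow> overt set" where
  "vis s q = Lb ` {i. Some i \<in> set (take q s)} \<union> Rt ` {0..cntN (take q s)}"

definition wf_list :: "nat \<Rightarrow> nat \<Rightarrow> nat option list \<Rightarrow> bool" where
  "wf_list m n s \<longleftrightarrow> length s = n \<and> (\<forall>i\<in>{1..m}. Some i \<in> set s)
     \<and> (\<forall>q<n. \<forall>i. s!q = Some i \<longrightarrow> i \<in> {1..m} \<and> Some i \<notin> set (take q s))"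

definition good :: "nat \<Rightarrow> nat \<Rightarrow> oforest \<Rightarrow> nat option list \<Rightarrow> bool" where
  "good m n F s \<longleftrightarrow> wf_list m n s \<and>
     (\<forall>q<n. \<forall>i. s!q = Some i \<longrightarrow> (\<exists>v. F i = Some v \<and> v \<in> vis s q
        \<and> (\<forall>q'<q. v \<in> vis s q' \<longrightarrow> (\<exists>i'. s!q' = Some i' \<and> i' < i))))"

definition Uset :: "nat \<Rightarrow> oforest \<Rightarrow> nat option list \<Rightarrow> nat \<Rightarrow> nat set" where
  "Uset m F s q = {i \<in> {1..m}. Some i \<notin> set (take q s) \<and> (\<exists>v. F i = Some v \<and> v \<in> vis s q)}"

lemma later_pos:
  assumes g: "good m n F s" and q: "q < n" and y: "y \<in> Uset m F s q" and ne: "s!q \<noteq> Some y"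
  shows "\<exists>i'. s!q = Some i' \<and> i' < y"
proof -
  have wf: "wf_list m n s" using g unfolding good_def by auto
  have y1: "y \<in> {1..m}" "Some y \<notin> set (take q s)" and yv: "\<exists>v. F y = Some v \<and> v \<in> vis s q"
    using y unfolding Uset_def by auto
  obtain q2 where q2: "q2 < n" "s!q2 = Some y"
    using wf y1 unfolding wf_list_def by (metis in_set_conv_nth)
  have "\<not> q2 < q"
  proof
    assume "q2 < q"
    then have "Some y \<in> set (take q s)" using q2 wf unfolding wf_list_def
      by (metis in_set_conv_nth length_take min_less_iff_conj nth_take)
    then show False using y1 by auto
  qed
  moreover have "q2 \<noteq> q" using q2 ne by auto
  ultimately have "q < q2" by auto
  obtain v where v: "F y = Some v" "\<forall>q'<q2. v \<in> vis s q' \<longrightarrow> (\<exists>i'. s!q' = Some i' \<and> i' < y)"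
    using g q2 unfolding good_def by blast
  then show ?thesis using yv \<open>q < q2\<close> by auto
qed

lemma good_step:
  assumes g: "good m n F s" and q: "q < n"
  shows "s!q = Some x \<Longrightarrow> x \<in> Uset m F s q \<and> (\<forall>y \<in> Uset m F s q. x \<le> y)"
    and "s!q = None \<Longrightarrow> Uset m F s q = {}"
proof -
  assume x: "s!q = Some x"
  have "x \<in> Uset m F s q"
    using g q x unfolding good_def wf_list_def Uset_def by blast
  moreover have "x \<le> y" if "y \<in> Uset m F s q" for y
    using later_pos[OF g q that] x by (cases "x = y") auto
  ultimately show "x \<in> Uset m F s q \<and> (\<forall>y \<in> Uset m F s q. x \<le> y)" by auto
next
  assume "s!q = None"
  then show "Uset m F s q = {}" using later_pos[OF g q] by fastforce
qed

lemma Uset_take: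
  assumes "take q s = take q s'"
  shows "Uset m F s q = Uset m F s' q"
  using assms unfolding Uset_def vis_def by simp

lemma good_unique:
  assumes g: "good m n F s" and g': "good m n F s'"
  shows "s = s'"
proof -
  have len: "length s = n" "length s' = n" using g g' unfolding good_def wf_list_def by auto
  have "\<forall>q'<q. s!q' = s'!q'" if "q \<le> n" for q
    using that
  proof (induction q)
    case 0 then show ?case by auto
  next
    case (Suc q)
    then have IH: "\<forall>q'<q. s!q' = s'!q'" by auto
    have "take q s = take q s'"
      by (rule nth_equalityI) (use IH len Suc.prems in auto)
    then have U: "Uset m F s q = Uset m F s' q" by (rule Uset_take)
    have q: "q < n" using Suc.prems by auto
    have "s!q = s'!q"
    proof (cases "s!q")
      case None
      then have "Uset m F s q = {}" using good_step(2)[OF g q] by auto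
      then have "s'!q = None" using good_step(1)[OF g' q] U by (cases "s'!q") auto
      then show ?thesis using None by auto
    next
      case (Some x)
      then have x: "x \<in> Uset m F s q" "\<forall>y \<in> Uset m F s q. x \<le> y" using good_step(1)[OF g q] by auto
      show ?thesis
      proof (cases "s'!q")
        case None
        then show ?thesis using good_step(2)[OF g' q] U x by auto
      next
        case (Some x')
        then have "x' \<in> Uset m F s q" "\<forall>y \<in> Uset m F s q. x' \<le> y"
          using good_step(1)[OF g' q] U by auto
        then show ?thesis using x Some \<open>s!q = Some x\<close> by (simp add: order_antisym)
      qed
    qed
    then show ?case using IH less_Suc_eq by auto
  qed
  then show ?thesis using len by (metis nth_equalityI order.refl)
qed


definition US :: "nat \<Rightarrow> oforest \<Rightarrow> nat set \<Rightarrow> nat \<Rightarrow> nat set" where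
  "US m F V j = {i \<in> {1..m} - V. \<exists>v. F i = Some v \<and> v \<in> Lb ` V \<union> Rt ` {0..j}}"

definition W12 :: "nat \<Rightarrow> oforest \<Rightarrow> nat option list \<Rightarrow> bool" where
  "W12 m F s \<longleftrightarrow> (\<forall>q<length s. \<forall>i. s!q = Some i \<longrightarrow> i \<in> {1..m} \<and> Some i \<notin> set (take q s)
     \<and> (\<exists>v. F i = Some v \<and> v \<in> vis s q \<and> (\<forall>q'<q. v \<in> vis s q' \<longrightarrow> (\<exists>i'. s!q' = Some i' \<and> i' < i))))"

definition hist :: "oforest \<Rightarrow> nat option list \<Rightarrow> nat \<Rightarrow> bool" where
  "hist F p i \<longleftrightarrow> (\<forall>v. F i = Some v \<longrightarrow> (\<forall>q'<length p. v \<in> vis p q' \<longrightarrow> (\<exists>i'. p!q' = Some i' \<and> i' < i)))"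

lemma cntN_take_mono: "q' \<le> q \<Longrightarrow> cntN (take q' s) \<le> cntN (take q s)"
proof -
  assume "q' \<le> q"
  then have "take q' s = take q' (take q s)" by (simp add: min_absorb1)
  moreover have "cntN (take q' xs) \<le> cntN xs" for xs :: "nat option list"
  proof -
    have "xs = take q' xs @ drop q' xs" by simp
    then have "cntN xs = cntN (take q' xs) + cntN (drop q' xs)" unfolding cntN_def
      by (metis filter_append length_append)
    then show ?thesis by simp
  qed
  ultimately show ?thesis by metis
qed

lemma vis_mono: "q' \<le> q \<Longrightarrow> vis s q' \<subseteq> vis s q"
  unfolding vis_def using cntN_take_mono[of q' q s] set_take_subset_set_take[of q' q s]
  by auto

lemma take_app_le: "q \<le> length p \<Longrightarrow> take q (p @ xs) = take q p"
  by simp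

lemma vis_app: "q \<le> length p \<Longrightarrow> vis (p @ xs) q = vis p q"
  unfolding vis_def by simp

lemma vis_full: "vis p (length p) = Lb ` {i. Some i \<in> set p} \<union> Rt ` {0..cntN p}"
  unfolding vis_def by simp

context
  fixes m n F
  assumes F: "F \<in> ordered_forests m n" and mn: "m \<le> n"
begin

lemma F_dom: "F i = Some v \<Longrightarrow> i \<in> {1..m}"
  using F unfolding ordered_forests_def by (auto simp: dom_def)

lemma F_dom2: "i \<in> {1..m} \<Longrightarrow> \<exists>v. F i = Some v"
  using F unfolding ordered_forests_def by (auto simp: dom_def)

lemma F_ran: "F i = Some v \<Longrightarrow> v \<in> Rt ` {0..n - m} \<union> Lb ` {1..m}"
  using F unfolding ordered_forests_def by (auto simp: ran_def)

lemma F_acyc: "acyclic {(Lb i, v) | i v. F i = Some v}"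
  using F unfolding ordered_forests_def by auto

lemma F_noself: "F i \<noteq> Some (Lb i)"
proof
  assume "F i = Some (Lb i)"
  then have "(Lb i, Lb i) \<in> {(Lb i, v) | i v. F i = Some v}\<^sup>+" by auto
  then show False using F_acyc unfolding acyclic_def by auto
qed

lemma step_some:
  assumes Vpar: "\<forall>i\<in>V. \<exists>v. F i = Some v \<and> v \<in> Lb ` V \<union> Rt ` {0..j}"
    and x: "x \<in> US m F V j"
  shows "US m F (insert x V) j = US m F V j - {x} \<union> ochildren F (Lb x)"
proof
  show "US m F (insert x V) j \<subseteq> US m F V j - {x} \<union> ochildren F (Lb x)"
    unfolding US_def ochildren_def by auto
next
  have xV: "x \<notin> V" using x unfolding US_def by auto
  have "i \<in> US m F (insert x V) j" if i: "F i = Some (Lb x)" for i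
  proof -
    have "i \<in> {1..m}" using F_dom i by auto
    moreover have "i \<noteq> x" using F_noself i by auto
    moreover have "i \<notin> V" using Vpar i xV by fastforce
    ultimately show ?thesis unfolding US_def using i by auto
  qed
  then show "US m F V j - {x} \<union> ochildren F (Lb x) \<subseteq> US m F (insert x V) j"
    unfolding ochildren_def by (auto simp: US_def)
qed

lemma step_none:
  assumes Vpar: "\<forall>i\<in>V. \<exists>v. F i = Some v \<and> v \<in> Lb ` V \<union> Rt ` {0..j}"
    and U: "US m F V j = {}"
  shows "US m F V (Suc j) = ochildren F (Rt (Suc j))"
proof
  show "US m F V (Suc j) \<subseteq> ochildren F (Rt (Suc j))"
  proof
    fix i assume i: "i \<in> US m F V (Suc j)"
    then obtain v where v: "F i = Some v" "v \<in> Lb ` V \<union> Rt ` {0..Suc j}" "i \<in> {1..m} - V"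
      unfolding US_def by auto
    have "v \<notin> Lb ` V \<union> Rt ` {0..j}" using U v unfolding US_def by auto
    then have "v = Rt (Suc j)" using v by (auto simp: le_Suc_eq)
    then show "i \<in> ochildren F (Rt (Suc j))" using v unfolding ochildren_def by auto
  qed
next
  show "ochildren F (Rt (Suc j)) \<subseteq> US m F V (Suc j)"
  proof
    fix i assume "i \<in> ochildren F (Rt (Suc j))"
    then have i: "F i = Some (Rt (Suc j))" unfolding ochildren_def by auto
    have "i \<notin> V" using Vpar i by fastforce
    then show "i \<in> US m F V (Suc j)" using i F_dom[OF i] unfolding US_def by auto
  qed
qed

lemma stuck:
  assumes V: "V \<subseteq> {1..m}" and U: "US m F V (n - m) = {}"
  shows "V = {1..m}"
proof (rule ccontr)
  assume "V \<noteq> {1..m}"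
  then obtain i0 where i0: "i0 \<in> {1..m} - V" using V by blast
  define R where "R = {(Lb i, v) | i v. F i = Some v}"
  have "R \<subseteq> (\<lambda>i. (Lb i, the (F i))) ` {1..m}"
    unfolding R_def using F_dom by force
  then have "finite R" using finite_subset by blast
  then have "wf (R\<inverse>)" using finite_acyclic_wf_converse F_acyc R_def by auto
  then obtain z where z: "z \<in> Lb ` ({1..m} - V)" "\<forall>y. (y, z) \<in> R\<inverse> \<longrightarrow> y \<notin> Lb ` ({1..m} - V)"
    using i0 unfolding wf_eq_minimal by (metis imageI)
  then obtain i where i: "z = Lb i" "i \<in> {1..m} - V" by auto
  obtain v where v: "F i = Some v" using F_dom2 i by auto
  then have "v \<notin> Lb ` ({1..m} - V)" using z i unfolding R_def by auto
  moreover have "v \<in> Rt ` {0..n - m} \<union> Lb ` {1..m}" using F_ran v by auto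
  ultimately have "v \<in> Lb ` V \<union> Rt ` {0..n - m}" by auto
  then have "i \<in> US m F V (n - m)" using i v unfolding US_def by auto
  then show False using U by auto
qed

lemma W12_prefix:
  assumes W: "W12 m F p" and q: "q < length p" and qi: "(p @ xs)!q = Some i"
  shows "i \<in> {1..m} \<and> Some i \<notin> set (take q (p @ xs)) \<and>
    (\<exists>v. F i = Some v \<and> v \<in> vis (p @ xs) q \<and> (\<forall>q'<q. v \<in> vis (p @ xs) q' \<longrightarrow> (\<exists>i'. (p @ xs)!q' = Some i' \<and> i' < i)))"
proof -
  have e1: "p!q = Some i" using q qi by (simp add: nth_append)
  have e2: "take q (p @ xs) = take q p" "vis (p @ xs) q = vis p q" using q vis_app[of q p xs] by auto
  have e3: "vis (p @ xs) q' = vis p q' \<and> (p @ xs)!q' = p!q'" if "q' < q" for q'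
    using that q vis_app[of q' p xs] by (auto simp: nth_append)
  have "i \<in> {1..m} \<and> Some i \<notin> set (take q p) \<and>
    (\<exists>v. F i = Some v \<and> v \<in> vis p q \<and> (\<forall>q'<q. v \<in> vis p q' \<longrightarrow> (\<exists>i'. p!q' = Some i' \<and> i' < i)))"
    using W q e1 unfolding W12_def by blast
  then show ?thesis unfolding e2 using e3 by metis
qed

lemma W12_snoc_none:
  assumes W: "W12 m F p"
  shows "W12 m F (p @ [None])"
  unfolding W12_def
proof (intro allI impI)
  fix q i assume q: "q < length (p @ [None])" and qi: "(p @ [None])!q = Some i"
  then have "q < length p" by (auto simp: nth_append less_Suc_eq split: if_splits)
  then show "i \<in> {1..m} \<and> Some i \<notin> set (take q (p @ [None])) \<and>
    (\<exists>v. F i = Some v \<and> v \<in> vis (p @ [None]) q \<and> (\<forall>q'<q. v \<in> vis (p @ [None]) q' \<longrightarrow> (\<exists>i'. (p @ [None])!q' = Some i' \<and> i' < i)))"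
    using W12_prefix[OF W _ qi] by blast
qed

lemma W12_snoc_some:
  assumes W: "W12 m F p" and x: "x \<in> {1..m}" "Some x \<notin> set p" "F x = Some vx" "vx \<in> vis p (length p)"
    and h: "hist F p x"
  shows "W12 m F (p @ [Some x])"
  unfolding W12_def
proof (intro allI impI)
  fix q i assume q: "q < length (p @ [Some x])" and qi: "(p @ [Some x])!q = Some i"
  show "i \<in> {1..m} \<and> Some i \<notin> set (take q (p @ [Some x])) \<and>
    (\<exists>v. F i = Some v \<and> v \<in> vis (p @ [Some x]) q \<and> (\<forall>q'<q. v \<in> vis (p @ [Some x]) q' \<longrightarrow> (\<exists>i'. (p @ [Some x])!q' = Some i' \<and> i' < i)))"
  proof (cases "q < length p")
    case True
    then show ?thesis using W12_prefix[OF W _ qi] by blast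
  next
    case False
    then have qe: "q = length p" using q by auto
    then have ix: "i = x" using qi by auto
    have e2: "take q (p @ [Some x]) = p" "vis (p @ [Some x]) q = vis p (length p)"
      using qe vis_app[of "length p" p "[Some x]"] by auto
    have e3: "vis (p @ [Some x]) q' = vis p q' \<and> (p @ [Some x])!q' = p!q'" if "q' < q" for q'
      using that qe vis_app[of q' p "[Some x]"] by (auto simp: nth_append)
    have "\<forall>q'<length p. vx \<in> vis p q' \<longrightarrow> (\<exists>i'. p!q' = Some i' \<and> i' < x)"
      using h x(3) unfolding hist_def by blast
    then show ?thesis unfolding ix e2 using x e3 qe by metis
  qed
qed

lemma A_gen:
  "k = card ({1..m} - V) + (n - m - j) \<Longrightarrow> j \<le> n - m \<Longrightarrow> V \<subseteq> {1..m}
   \<Longrightarrow> V = {i. Some i \<in> set p} \<Longrightarrow> j = cntN p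
   \<Longrightarrow> (\<forall>i\<in>V. \<exists>v. F i = Some v \<and> v \<in> Lb ` V \<union> Rt ` {0..j})
   \<Longrightarrow> W12 m F p \<Longrightarrow> (\<forall>i \<in> US m F V j. hist F p i)
   \<Longrightarrow> length (p @ ptrav_aux F (n - m) k j (US m F V j)) = length p + k
     \<and> (\<forall>i\<in>{1..m}. Some i \<in> set (p @ ptrav_aux F (n - m) k j (US m F V j)))
     \<and> W12 m F (p @ ptrav_aux F (n - m) k j (US m F V j))"
proof (induction k arbitrary: p V j)
  case 0
  have "card ({1..m} - V) = 0" using "0.prems"(1) by simp
  then have e: "{1..m} - V = {}" by simp
  have "ptrav_aux F (n - m) 0 j (US m F V j) = []" by simp
  moreover have "\<forall>i\<in>{1..m}. Some i \<in> set p" using e "0.prems"(4) by blast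
  ultimately show ?case using "0.prems"(7) by simp
next
  case (Suc k)
  note pr = Suc.prems
  let ?U = "US m F V j"
  have vfull: "vis p (length p) = Lb ` V \<union> Rt ` {0..j}"
    using vis_full[of p] pr(4,5) by simp
  show ?case
  proof (cases "?U = {}")
    case False
    define x where "x = Min ?U"
    have finU: "finite ?U" unfolding US_def by simp
    have x: "x \<in> ?U" using Min_in[OF finU False] unfolding x_def .
    have xmin: "x \<le> y" if "y \<in> ?U" for y using Min_le[OF finU that] unfolding x_def .
    have xV: "x \<in> {1..m}" "x \<notin> V" using x unfolding US_def by auto
    obtain vx where vx: "F x = Some vx" "vx \<in> Lb ` V \<union> Rt ` {0..j}" using x unfolding US_def by blast
    have st: "US m F (insert x V) j = ?U - {x} \<union> ochildren F (Lb x)" using step_some[OF pr(6) x] .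
    have rec: "ptrav_aux F (n - m) (Suc k) j ?U = Some x # ptrav_aux F (n - m) k j (US m F (insert x V) j)"
      unfolding st using False by (simp add: x_def)
    define p' where "p' = p @ [Some x]"
    have app: "p @ ptrav_aux F (n - m) (Suc k) j ?U = p' @ ptrav_aux F (n - m) k j (US m F (insert x V) j)"
      unfolding rec p'_def by simp
    have c1: "k = card ({1..m} - insert x V) + (n - m - j)"
    proof -
      have ee: "{1..m} - V = insert x ({1..m} - insert x V)" using xV by blast
      have "card ({1..m} - V) = Suc (card ({1..m} - insert x V))"
        unfolding ee by (subst card_insert_disjoint) auto
      then show ?thesis using pr(1) by simp
    qed
    have c2: "insert x V \<subseteq> {1..m}" using pr(3) xV by blast
    have c3: "insert x V = {i. Some i \<in> set p'}" using pr(4) unfolding p'_def by auto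
    have c4: "j = cntN p'" using pr(5) unfolding p'_def cntN_def by simp
    have c5: "\<forall>i\<in>insert x V. \<exists>v. F i = Some v \<and> v \<in> Lb ` insert x V \<union> Rt ` {0..j}"
      using pr(6) vx by blast
    have c6: "W12 m F p'"
      unfolding p'_def
    proof (rule W12_snoc_some[OF pr(7) xV(1) _ vx(1)])
      show "Some x \<notin> set p" using xV(2) pr(4) by blast
      show "vx \<in> vis p (length p)" using vx(2) vfull by blast
      show "hist F p x" using pr(8) x by blast
    qed
    have c7: "\<forall>i \<in> US m F (insert x V) j. hist F p' i"
    proof
      fix i assume i: "i \<in> US m F (insert x V) j"
      have e3: "vis p' q' = vis p q'" if "q' \<le> length p" for q'
        using vis_app[OF that] unfolding p'_def by blast
      have e4: "p'!q' = p!q'" if "q' < length p" for q'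
        using that unfolding p'_def by (simp add: nth_append)
      have e5: "p'!length p = Some x" unfolding p'_def by simp
      have lp: "length p' = Suc (length p)" unfolding p'_def by simp
      show "hist F p' i"
      proof (cases "i \<in> ?U")
        case True
        then have h: "hist F p i" using pr(8) by blast
        have "i \<noteq> x" using i unfolding US_def by blast
        then have "x < i" using xmin[OF True] by simp
        show ?thesis unfolding hist_def
        proof (intro allI impI)
          fix v q' assume v: "F i = Some v" and q': "q' < length p'" "v \<in> vis p' q'"
          show "\<exists>i'. p'!q' = Some i' \<and> i' < i"
          proof (cases "q' < length p")
            case True
            then show ?thesis using h v q' e3 e4 unfolding hist_def by simp
          next
            case False
            then have "q' = length p" using q' lp by simp
            then show ?thesis using e5 \<open>x < i\<close> by simp
          qed
        qed
      next
        case False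
        then have "i \<in> ochildren F (Lb x)" using i st by blast
        then have fi: "F i = Some (Lb x)" unfolding ochildren_def by simp
        have nv: "Lb x \<notin> vis p q'" if "q' \<le> length p" for q'
          using vis_mono[OF that, of p] vfull xV(2) by blast
        show ?thesis unfolding hist_def
        proof (intro allI impI)
          fix v q' assume v: "F i = Some v" and q': "q' < length p'" "v \<in> vis p' q'"
          then have "v = Lb x" "q' \<le> length p" using fi lp by auto
          then show "\<exists>i'. p'!q' = Some i' \<and> i' < i" using nv e3 q'(2) by simp
        qed
      qed
    qed
    have IH: "length (p' @ ptrav_aux F (n - m) k j (US m F (insert x V) j)) = length p' + k
     \<and> (\<forall>i\<in>{1..m}. Some i \<in> set (p' @ ptrav_aux F (n - m) k j (US m F (insert x V) j)))
     \<and> W12 m F (p' @ ptrav_aux F (n - m) k j (US m F (insert x V) j))"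
      by (rule Suc.IH[OF c1 pr(2) c2 c3 c4 c5 c6 c7])
    have lp: "length p' = length p + 1" unfolding p'_def by simp
    show ?thesis unfolding app using IH lp by simp
  next
    case True
    show ?thesis
    proof (cases "j < n - m")
      case jl: True
      have st: "US m F V (Suc j) = ochildren F (Rt (Suc j))" using step_none[OF pr(6) True] .
      have rec: "ptrav_aux F (n - m) (Suc k) j ?U = None # ptrav_aux F (n - m) k (Suc j) (US m F V (Suc j))"
        unfolding st using True jl by simp
      define p' where "p' = p @ [None]"
      have app: "p @ ptrav_aux F (n - m) (Suc k) j ?U = p' @ ptrav_aux F (n - m) k (Suc j) (US m F V (Suc j))"
        unfolding rec p'_def by simp
      have c1: "k = card ({1..m} - V) + (n - m - Suc j)" using pr(1) jl by simp
      have c2: "Suc j \<le> n - m" using jl by simp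
      have c3: "V = {i. Some i \<in> set p'}" using pr(4) unfolding p'_def by auto
      have c4: "Suc j = cntN p'" using pr(5) unfolding p'_def cntN_def by simp
      have c5: "\<forall>i\<in>V. \<exists>v. F i = Some v \<and> v \<in> Lb ` V \<union> Rt ` {0..Suc j}"
        using pr(6) by fastforce
      have c6: "W12 m F p'" unfolding p'_def by (rule W12_snoc_none[OF pr(7)])
      have c7: "\<forall>i \<in> US m F V (Suc j). hist F p' i"
      proof
        fix i assume i: "i \<in> US m F V (Suc j)"
        then have fi: "F i = Some (Rt (Suc j))" using st unfolding ochildren_def by blast
        have e3: "vis p' q' = vis p q'" if "q' \<le> length p" for q'
          using vis_app[OF that] unfolding p'_def by blast
        have nv: "Rt (Suc j) \<notin> vis p q'" if "q' \<le> length p" for q'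
          using vis_mono[OF that, of p] vfull by auto
        have lp: "length p' = Suc (length p)" unfolding p'_def by simp
        show "hist F p' i" unfolding hist_def
        proof (intro allI impI)
          fix v q' assume v: "F i = Some v" and q': "q' < length p'" "v \<in> vis p' q'"
          then have "v = Rt (Suc j)" "q' \<le> length p" using fi lp by auto
          then show "\<exists>i'. p'!q' = Some i' \<and> i' < i" using nv e3 q'(2) by simp
        qed
      qed
      have IH: "length (p' @ ptrav_aux F (n - m) k (Suc j) (US m F V (Suc j))) = length p' + k
       \<and> (\<forall>i\<in>{1..m}. Some i \<in> set (p' @ ptrav_aux F (n - m) k (Suc j) (US m F V (Suc j))))
       \<and> W12 m F (p' @ ptrav_aux F (n - m) k (Suc j) (US m F V (Suc j)))"
        by (rule Suc.IH[OF c1 c2 pr(3) c3 c4 c5 c6 c7])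
      have lp: "length p' = length p + 1" unfolding p'_def by simp
      show ?thesis unfolding app using IH lp by simp
    next
      case False
      then have jr: "j = n - m" using pr(2) by simp
      then have "V = {1..m}" using stuck[OF pr(3)] True by simp
      then have e: "{1..m} - V = {}" by simp
      have False using pr(1) unfolding e jr by simp
      then show ?thesis ..
    qed
  qed
qed

lemma trav_good: "good m n F (priority_traversal m n F)"
proof -
  have U0: "US m F {} 0 = ochildren F (Rt 0)"
    unfolding US_def ochildren_def using F_dom by auto
  have a1: "n = card ({1..m} - {}) + (n - m - 0)" using mn by simp
  have a2: "(0::nat) \<le> n - m" by simp
  have a3: "{} \<subseteq> {1..m}" by simp
  have a4: "{} = {i. Some i \<in> set ([] :: nat option list)}" by simp
  have a5: "0 = cntN []" by (simp add: cntN_def)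
  have a6: "\<forall>i\<in>{}. \<exists>v. F i = Some v \<and> v \<in> Lb ` {} \<union> Rt ` {0..0}" by simp
  have a7: "W12 m F []" unfolding W12_def by simp
  have a8: "\<forall>i \<in> US m F {} 0. hist F [] i" unfolding hist_def by simp
  note h = A_gen[OF a1 a2 a3 a4 a5 a6 a7 a8]
  have pt: "priority_traversal m n F = ptrav_aux F (n - m) n 0 (US m F {} 0)"
    unfolding priority_traversal_def U0 ..
  have h2: "length (priority_traversal m n F) = n" "\<forall>i\<in>{1..m}. Some i \<in> set (priority_traversal m n F)"
     "W12 m F (priority_traversal m n F)"
    using h unfolding pt by simp_all
  show ?thesis unfolding good_def wf_list_def
  proof (intro conjI)
    show "length (priority_traversal m n F) = n" by (rule h2(1))
    show "\<forall>i\<in>{1..m}. Some i \<in> set (priority_traversal m n F)" by (rule h2(2))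
    show "\<forall>q<n. \<forall>i. priority_traversal m n F ! q = Some i \<longrightarrow> i \<in> {1..m} \<and> Some i \<notin> set (take q (priority_traversal m n F))"
      using h2(3) unfolding W12_def h2(1) by blast
    show "\<forall>q<n. \<forall>i. priority_traversal m n F ! q = Some i \<longrightarrow> (\<exists>v. F i = Some v \<and> v \<in> vis (priority_traversal m n F) q \<and>
        (\<forall>q'<q. v \<in> vis (priority_traversal m n F) q' \<longrightarrow> (\<exists>i'. priority_traversal m n F ! q' = Some i' \<and> i' < i)))"
      using h2(3) unfolding W12_def h2(1) by blast
  qed
qed

end


definition valid :: "nat \<Rightarrow> nat \<Rightarrow> overt \<Rightarrow> bool" where
  "valid m n v = (case v of Lb i \<Rightarrow> i \<in> {1..m} | Rt j \<Rightarrow> j \<le> n - m)"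

lemma cntN_take_Suc:
  "p < length xs \<Longrightarrow> cntN (take (Suc p) xs) = cntN (take p xs) + (if xs!p = None then 1 else 0)"
  unfolding cntN_def by (simp add: take_Suc_conv_app_nth)

lemma cntN_take_mono': "q' \<le> q \<Longrightarrow> cntN (take q' s) \<le> cntN (take q s)"
proof -
  assume "q' \<le> q"
  then have "take q' s = take q' (take q s)" by (simp add: min_absorb1)
  moreover have "cntN (take q' xs) \<le> cntN xs" for xs :: "nat option list"
  proof -
    have "xs = take q' xs @ drop q' xs" by simp
    then have "cntN xs = cntN (take q' xs) + cntN (drop q' xs)" unfolding cntN_def
      by (metis filter_append length_append)
    then show ?thesis by simp
  qed
  ultimately show ?thesis by metis
qed

lemma nth_none_exists:
  "1 \<le> j \<Longrightarrow> j \<le> cntN xs \<Longrightarrow> \<exists>p < length xs. xs!p = None \<and> cntN (take (Suc p) xs) = j"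
proof (induction xs arbitrary: j)
  case Nil then show ?case by (simp add: cntN_def)
next
  case (Cons x xs)
  show ?case
  proof (cases "x = None")
    case True
    show ?thesis
    proof (cases "j = 1")
      case True then show ?thesis using \<open>x = None\<close> by (intro exI[of _ 0]) (simp add: cntN_def)
    next
      case False
      then have "1 \<le> j - 1" "j - 1 \<le> cntN xs" using Cons.prems True by (auto simp: cntN_def)
      then obtain p where "p < length xs" "xs!p = None" "cntN (take (Suc p) xs) = j - 1"
        using Cons.IH by blast
      then show ?thesis using True Cons.prems by (intro exI[of _ "Suc p"]) (auto simp: cntN_def)
    qed
  next
    case False
    then have "j \<le> cntN xs" using Cons.prems by (auto simp: cntN_def)
    then obtain p where "p < length xs" "xs!p = None" "cntN (take (Suc p) xs) = j"
      using Cons.IH Cons.prems by blast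
    then show ?thesis using False by (intro exI[of _ "Suc p"]) (auto simp: cntN_def)
  qed
qed

lemma none_uniq:
  assumes "p < length xs" "p' < length xs" "xs!p = None" "xs!p' = None"
    "cntN (take (Suc p) xs) = cntN (take (Suc p') xs)"
  shows "p = p'"
proof (rule ccontr)
  have a: "cntN (take (Suc a) xs) < cntN (take (Suc b) xs)" if "a < b" "b < length xs" "xs!b = None" for a b
  proof -
    have "cntN (take (Suc a) xs) \<le> cntN (take b xs)" using cntN_take_mono'[of "Suc a" b xs] that by auto
    then show ?thesis using cntN_take_Suc[of b xs] that by auto
  qed
  assume "p \<noteq> p'"
  then show False using a[of p p'] a[of p' p] assms by (cases "p < p'") auto
qed

context
  fixes m n s
  assumes wl: "wf_list m n s"
begin

lemma wl_len: "length s = n" using wl unfolding wf_list_def by auto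

lemma wl_some: "q < n \<Longrightarrow> s!q = Some i \<Longrightarrow> i \<in> {1..m}"
  using wl unfolding wf_list_def by auto

lemma wl_uniq: "q < n \<Longrightarrow> q' < n \<Longrightarrow> s!q = Some i \<Longrightarrow> s!q' = Some i \<Longrightarrow> q = q'"
proof (rule ccontr)
  have a: False if "a < b" "b < n" "s!a = Some i" "s!b = Some i" for a b
  proof -
    have "take b s ! a = Some i" "a < length (take b s)" using that wl_len by auto
    then have "Some i \<in> set (take b s)" by (metis nth_mem)
    then show False using wl that unfolding wf_list_def by auto
  qed
  assume "q < n" "q' < n" "s!q = Some i" "s!q' = Some i" "q \<noteq> q'"
  then show False using a[of q q'] a[of q' q] by (cases "q < q'") auto
qed

lemma wl_exists: "i \<in> {1..m} \<Longrightarrow> \<exists>q<n. s!q = Some i"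
  using wl unfolding wf_list_def by (metis in_set_conv_nth)

lemma pos_Lb_eq:
  assumes "q < n" "s!q = Some i"
  shows "visit_pos s (Lb i) = Suc q"
proof -
  have "(THE k. k < length s \<and> s!k = Some i) = q"
  proof (rule the_equality)
    show "q < length s \<and> s!q = Some i" using assms wl_len by auto
    show "k = q" if "k < length s \<and> s!k = Some i" for k using wl_uniq[of k q i] that assms wl_len by auto
  qed
  then show ?thesis unfolding visit_pos_def by simp
qed

lemma pos_Lb: "i \<in> {1..m} \<Longrightarrow> \<exists>q<n. s!q = Some i \<and> visit_pos s (Lb i) = Suc q"
  using wl_exists pos_Lb_eq by blast

lemma wl_cnt: "cntN s = n - m \<and> m \<le> n"
proof -
  let ?A = "{q. q < n \<and> s!q \<noteq> None}"
  have "bij_betw (\<lambda>q. the (s!q)) ?A {1..m}"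
    unfolding bij_betw_def
  proof
    show "inj_on (\<lambda>q. the (s!q)) ?A"
    proof (rule inj_onI)
      fix a b assume ab: "a \<in> ?A" "b \<in> ?A" "the (s!a) = the (s!b)"
      then obtain i where "s!a = Some i" "s!b = Some i" by (cases "s!a"; cases "s!b") auto
      then show "a = b" using wl_uniq[of a b i] ab by auto
    qed
    show "(\<lambda>q. the (s!q)) ` ?A = {1..m}"
    proof
      show "(\<lambda>q. the (s!q)) ` ?A \<subseteq> {1..m}" using wl_some by fastforce
      show "{1..m} \<subseteq> (\<lambda>q. the (s!q)) ` ?A"
      proof
        fix i assume "i \<in> {1..m}"
        then obtain q where "q < n" "s!q = Some i" using wl_exists by blast
        then show "i \<in> (\<lambda>q. the (s!q)) ` ?A" by force
      qed
    qed
  qed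
  then have cA: "card ?A = m" using bij_betw_same_card by fastforce
  have "length (filter (\<lambda>x. \<not> x = None) s) = card ?A"
    using wl_len by (simp add: length_filter_conv_card)
  moreover have "length (filter (\<lambda>x. x = None) s) + length (filter (\<lambda>x. \<not> x = None) s) = n"
    using sum_length_filter_compl[of "\<lambda>x. x = None" s] wl_len by simp
  ultimately show ?thesis using cA unfolding cntN_def by auto
qed

lemma pos_Rt_eq:
  assumes "p < n" "s!p = None" "cntN (take (Suc p) s) = j" "1 \<le> j"
  shows "visit_pos s (Rt j) = Suc p"
proof -
  have "(THE k. k < length s \<and> s!k = None \<and> cntN (take (Suc k) s) = j) = p"
  proof (rule the_equality)
    show "p < length s \<and> s!p = None \<and> cntN (take (Suc p) s) = j" using assms wl_len by auto
    show "k = p" if "k < length s \<and> s!k = None \<and> cntN (take (Suc k) s) = j" for k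
      using none_uniq[of k s p] that assms wl_len by auto
  qed
  then show ?thesis unfolding visit_pos_def cntN_def using assms by simp
qed

lemma pos_Rt: "1 \<le> j \<Longrightarrow> j \<le> n - m \<Longrightarrow> \<exists>p<n. s!p = None \<and> cntN (take (Suc p) s) = j \<and> visit_pos s (Rt j) = Suc p"
  using nth_none_exists[of j s] wl_cnt wl_len pos_Rt_eq by auto

lemma VP:
  assumes v: "valid m n v" and q: "q \<le> n"
  shows "v \<in> vis s q \<longleftrightarrow> visit_pos s v \<le> q"
proof (cases v)
  case (Lb i)
  then have i: "i \<in> {1..m}" using v unfolding valid_def by auto
  obtain p where p: "p < n" "s!p = Some i" "visit_pos s (Lb i) = Suc p" using pos_Lb[OF i] by auto
  have "Some i \<in> set (take q s) \<longleftrightarrow> p < q"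
  proof
    assume "Some i \<in> set (take q s)"
    then obtain k where k: "k < length (take q s)" "take q s ! k = Some i" by (auto simp: in_set_conv_nth)
    then have "k < q" "s!k = Some i" "k < n" using wl_len by auto
    then show "p < q" using wl_uniq[of k p i] p by auto
  next
    assume "p < q"
    then have "take q s ! p = Some i" "p < length (take q s)" using p wl_len q by auto
    then show "Some i \<in> set (take q s)" by (metis nth_mem)
  qed
  then show ?thesis using Lb p unfolding vis_def by auto
next
  case (Rt j)
  show ?thesis
  proof (cases "j = 0")
    case True then show ?thesis using Rt unfolding vis_def visit_pos_def by auto
  next
    case False
    then obtain p where p: "p < n" "s!p = None" "cntN (take (Suc p) s) = j" "visit_pos s (Rt j) = Suc p"
      using pos_Rt[of j] v Rt unfolding valid_def by auto
    have "j \<le> cntN (take q s) \<longleftrightarrow> Suc p \<le> q"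
    proof
      assume "j \<le> cntN (take q s)"
      show "Suc p \<le> q"
      proof (rule ccontr)
        assume "\<not> Suc p \<le> q"
        then have "cntN (take q s) \<le> cntN (take p s)" using cntN_take_mono' by auto
        moreover have "cntN (take (Suc p) s) = cntN (take p s) + 1" using cntN_take_Suc[of p s] p wl_len by auto
        ultimately show False using p \<open>j \<le> cntN (take q s)\<close> by auto
      qed
    next
      assume "Suc p \<le> q"
      then show "j \<le> cntN (take q s)" using cntN_take_mono'[of "Suc p" q s] p by auto
    qed
    then show ?thesis using Rt p unfolding vis_def by auto
  qed
qed

lemma P4:
  assumes a: "a \<le> n"
  shows "valid m n (relabel_vertex s a) \<and> visit_pos s (relabel_vertex s a) = a"
proof (cases "a = 0")
  case True then show ?thesis unfolding relabel_vertex_def valid_def visit_pos_def by auto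
next
  case False
  then have a1: "a - 1 < n" "Suc (a - 1) = a" using a by auto
  show ?thesis
  proof (cases "s!(a - 1)")
    case None
    let ?c = "cntN (take a s)"
    have rv: "relabel_vertex s a = Rt ?c" using False None unfolding relabel_vertex_def cntN_def by auto
    have c1: "?c = cntN (take (a - 1) s) + 1" using cntN_take_Suc[of "a - 1" s] a1 None wl_len by auto
    have "?c \<le> cntN s" using cntN_take_mono'[of a "length s" s] a wl_len by auto
    then have "?c \<le> n - m" using wl_cnt by auto
    moreover have "visit_pos s (Rt ?c) = a" using pos_Rt_eq[of "a - 1" ?c] a1 None c1 by auto
    ultimately show ?thesis using rv unfolding valid_def by auto
  next
    case (Some i)
    have rv: "relabel_vertex s a = Lb i" using False Some unfolding relabel_vertex_def by auto
    show ?thesis using rv wl_some[OF a1(1) Some] pos_Lb_eq[OF a1(1) Some] a1 unfolding valid_def by auto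
  qed
qed

lemma P5:
  assumes v: "valid m n v"
  shows "relabel_vertex s (visit_pos s v) = v \<and> visit_pos s v \<le> n"
proof (cases v)
  case (Lb i)
  then obtain p where p: "p < n" "s!p = Some i" "visit_pos s (Lb i) = Suc p"
    using pos_Lb v unfolding valid_def by auto
  then show ?thesis using Lb unfolding relabel_vertex_def by auto
next
  case (Rt j)
  show ?thesis
  proof (cases "j = 0")
    case True then show ?thesis using Rt unfolding relabel_vertex_def visit_pos_def by auto
  next
    case False
    then obtain p where p: "p < n" "s!p = None" "cntN (take (Suc p) s) = j" "visit_pos s (Rt j) = Suc p"
      using pos_Rt[of j] v Rt unfolding valid_def by auto
    then show ?thesis using Rt unfolding relabel_vertex_def cntN_def by auto
  qed
qed

lemma P3:
  assumes g: "good m n F s" and Fi: "F i = Some v" and vv: "valid m n v" and i: "i \<in> {1..m}"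
  shows "visit_pos s v < visit_pos s (Lb i) \<and>
    (\<forall>x. visit_pos s v < x \<longrightarrow> x < visit_pos s (Lb i) \<longrightarrow> (\<exists>i'. s!(x - 1) = Some i' \<and> i' < i))"
proof -
  obtain q where q: "q < n" "s!q = Some i" "visit_pos s (Lb i) = Suc q" using pos_Lb[OF i] by auto
  obtain v' where v': "F i = Some v'" "v' \<in> vis s q" "\<forall>q'<q. v' \<in> vis s q' \<longrightarrow> (\<exists>i'. s!q' = Some i' \<and> i' < i)"
    using g q unfolding good_def by blast
  have vv': "v' = v" using v' Fi by auto
  have "visit_pos s v \<le> q" using VP[OF vv, of q] q v' vv' by auto
  moreover have "\<exists>i'. s!(x - 1) = Some i' \<and> i' < i" if "visit_pos s v < x" "x < Suc q" for x
  proof -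
    have "v \<in> vis s (x - 1)" using VP[OF vv, of "x - 1"] that q by auto
    then show ?thesis using v' vv' that by auto
  qed
  ultimately show ?thesis using q by auto
qed

end


context
  fixes n m C
  assumes C: "C \<in> complete_chains n m"
begin

abbreviation "lam \<equiv> jh_perm C"
abbreviation "w \<equiv> inv_pperm n lam"

lemma w_len: "length w = n"
  unfolding inv_pperm_def by simp

lemma w_nth: "x < n \<Longrightarrow> w!x = (if Suc x \<in> set lam
    then Some (Suc (THE i. i < length lam \<and> lam!i = Suc x)) else None)"
  unfolding inv_pperm_def by (simp del: upt_Suc)

lemma lam_index: "k < m \<Longrightarrow> (THE i. i < length lam \<and> lam!i = lam!k) = k"
  using jh_distinct[OF C] jh_length[OF C]
  by (intro the_equality) (auto simp: nth_eq_iff_index_eq)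

lemma w_lam: "k < m \<Longrightarrow> lam!k - 1 < n \<and> w!(lam!k - 1) = Some (Suc k)"
proof -
  assume k: "k < m"
  have r: "lam!k \<in> {1..n}" using jh_range[OF C k] .
  have "lam!k \<in> set lam" using k jh_length[OF C] by auto
  then show ?thesis using w_nth[of "lam!k - 1"] r lam_index[OF k] by auto
qed

lemma w_some: "x < n \<Longrightarrow> w!x = Some i \<Longrightarrow> i \<in> {1..m} \<and> lam!(i - 1) = Suc x"
proof -
  assume x: "x < n" "w!x = Some i"
  then have "Suc x \<in> set lam" using w_nth[OF x(1)] by (auto split: if_splits)
  then obtain k where k: "k < m" "lam!k = Suc x" using jh_length[OF C] by (auto simp: in_set_conv_nth)
  then have "w!x = Some (Suc k)" using w_lam[OF k(1)] by auto
  then show ?thesis using x k by auto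
qed

lemma w_wf: "wf_list m n w"
  unfolding wf_list_def
proof (intro conjI ballI allI impI)
  show "length w = n" by (rule w_len)
  fix i assume "i \<in> {1..m}"
  then have "i - 1 < m" "Suc (i - 1) = i" by auto
  then show "Some i \<in> set w" using w_lam[of "i - 1"] w_len by (metis nth_mem)
next
  fix q i assume q: "q < n" "w!q = Some i"
  show "i \<in> {1..m}" using w_some[OF q] by auto
  show "Some i \<notin> set (take q w)"
  proof
    assume "Some i \<in> set (take q w)"
    then obtain k where k: "k < q" "w!k = Some i" by (auto simp: in_set_conv_nth)
    then show False using w_some[OF q] w_some[of k i] q by auto
  qed
qed

definition parP :: "nat \<Rightarrow> nat" where "parP k = (THE p. (p, lam!k) \<in> last C)"

lemma parP: "k < m \<Longrightarrow> (parP k, lam!k) \<in> C!Suc k \<and> (parP k, lam!k) \<in> last C \<and> parP k < lam!k"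
proof -
  assume k: "k < m"
  obtain a where a: "(a, lam!k) \<in> C!Suc k" using jh_edge[OF C k] by auto
  have "C!Suc k \<subseteq> C!m" using chain_mono[OF C, of "Suc k" m] k by auto
  then have aP: "(a, lam!k) \<in> last C" using a chain_last[OF C] by auto
  have "parP k = a" unfolding parP_def
  proof (rule the_equality)
    show "(a, lam!k) \<in> last C" by (rule aP)
    show "p = a" if "(p, lam!k) \<in> last C" for p
      using pf_up[OF chain_last_pf[OF C] that aP] .
  qed
  moreover have "a < lam!k" using pf_inc[OF chain_last_pf[OF C] aP] .
  ultimately show ?thesis using a aP by simp
qed

lemma parP_uniq: "k < m \<Longrightarrow> (p, lam!k) \<in> last C \<Longrightarrow> p = parP k"
  using parP pf_up[OF chain_last_pf[OF C]] by blast

lemma phi_val: "phi_chain n C i = (if i \<in> {1..m} then Some (relabel_vertex w (parP (i - 1))) else None)"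
  unfolding phi_chain_def Let_def parP_def using jh_length[OF C] by auto

lemma phi_good: "good m n (phi_chain n C) w"
  unfolding good_def
proof (intro conjI allI impI)
  show "wf_list m n w" by (rule w_wf)
  fix q i assume q: "q < n" and qi: "w!q = Some i"
  have i: "i \<in> {1..m}" "lam!(i - 1) = Suc q" using w_some[OF q qi] by auto
  define a where "a = parP (i - 1)"
  have im: "i - 1 < m" "Suc (i - 1) = i" using i by auto
  have a: "(a, lam!(i - 1)) \<in> C!i" "a < Suc q" using parP[OF im(1)] im(2) i unfolding a_def by auto
  define v where "v = relabel_vertex w a"
  have an: "a \<le> n" using a q by auto
  have vv: "valid m n v" "visit_pos w v = a" using P4[OF w_wf an] unfolding v_def by auto
  have Fi: "phi_chain n C i = Some v" using phi_val[of i] i unfolding v_def a_def by auto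
  have pfi: "pf_local n (C!i)" using chain_basic(3)[OF C, of i] i pf_iff_local by auto
  have "v \<in> vis w q" using VP[OF w_wf vv(1), of q] vv a q by auto
  moreover have "\<exists>i'. w!q' = Some i' \<and> i' < i" if q': "q' < q" "v \<in> vis w q'" for q'
  proof -
    have "a \<le> q'" using VP[OF w_wf vv(1), of q'] q' q vv by auto
    moreover have "Suc q' \<le> lam!(i - 1)" using q' i by simp
    ultimately have "a < Suc q'" "Suc q' \<le> lam!(i - 1)" by simp_all
    then obtain c where c: "(c, Suc q') \<in> C!i" using pf_loc[OF pfi a(1), of "Suc q'"] by blast
    have "Suc q' \<in> set (take i lam)" using chain_C3[OF C, of i] c i by auto
    then obtain k where k: "k < i" "lam!k = Suc q'" using jh_length[OF C] i
      by (auto simp: in_set_conv_nth)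
    have km: "k < m" using k i by auto
    have "k \<noteq> i - 1" using k i q' by auto
    then have "Suc k < i" using k by auto
    moreover have "w!q' = Some (Suc k)" using w_lam[OF km] k by auto
    ultimately show ?thesis by auto
  qed
  ultimately show "\<exists>v. phi_chain n C i = Some v \<and> v \<in> vis w q \<and>
      (\<forall>q'<q. v \<in> vis w q' \<longrightarrow> (\<exists>i'. w!q' = Some i' \<and> i' < i))"
    using Fi by blast
qed

lemma phi_valid: "phi_chain n C i = Some v \<Longrightarrow> i \<in> {1..m} \<and> valid m n v"
proof -
  assume h: "phi_chain n C i = Some v"
  then have i: "i \<in> {1..m}" and v: "v = relabel_vertex w (parP (i - 1))"
    using phi_val[of i] by (auto split: if_splits)
  have "i - 1 < m" using i by auto
  then have "parP (i - 1) \<le> n" using parP jh_range[OF C] by fastforce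
  then show ?thesis using P4[OF w_wf] i v by auto
qed

lemma phi_forest: "phi_chain n C \<in> ordered_forests m n"
proof -
  let ?F = "phi_chain n C"
  have dom: "dom ?F = {1..m}" using phi_val by (auto simp: dom_def)
  have ran: "ran ?F \<subseteq> Rt ` {0..n - m} \<union> Lb ` {1..m}"
  proof
    fix v assume "v \<in> ran ?F"
    then obtain i where "?F i = Some v" by (auto simp: ran_def)
    then have "valid m n v" using phi_valid by auto
    then show "v \<in> Rt ` {0..n - m} \<union> Lb ` {1..m}" unfolding valid_def by (cases v) auto
  qed
  let ?R = "{(Lb i, v) | i v. ?F i = Some v}"
  have "?R\<inverse> \<subseteq> measure (visit_pos w)"
  proof
    fix e assume "e \<in> ?R\<inverse>"
    then obtain i v where e: "e = (v, Lb i)" "?F i = Some v" by auto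
    then have "i \<in> {1..m}" "valid m n v" using phi_valid by auto
    then have "visit_pos w v < visit_pos w (Lb i)" using P3[OF w_wf phi_good e(2)] by auto
    then show "e \<in> measure (visit_pos w)" using e by auto
  qed
  then have "wf (?R\<inverse>)" using wf_subset wf_measure by blast
  then have "acyclic ?R" using wf_acyclic acyclic_converse by blast
  then show ?thesis unfolding ordered_forests_def using dom ran by auto
qed

lemma pos_w_lam: "k < m \<Longrightarrow> visit_pos w (Lb (Suc k)) = lam!k"
  using w_lam pos_Lb_eq[OF w_wf] by (metis Suc_diff_1 jh_range[OF C] atLeastAtMost_iff less_le_trans zero_less_one)

lemma phi_pf:
  assumes tr: "priority_traversal m n (phi_chain n C) = w"
  shows "priority_forest_of m n (phi_chain n C) = last C"
proof -
  let ?F = "phi_chain n C"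
  have "priority_forest_of m n ?F = {(visit_pos w v, visit_pos w (Lb i)) | i v. ?F i = Some v}"
    unfolding priority_forest_of_def tr Let_def by (rule refl)
  also have "\<dots> = {(parP k, lam!k) | k. k < m}"
  proof
    show "{(visit_pos w v, visit_pos w (Lb i)) | i v. ?F i = Some v} \<subseteq> {(parP k, lam!k) | k. k < m}"
    proof
      fix e assume "e \<in> {(visit_pos w v, visit_pos w (Lb i)) | i v. ?F i = Some v}"
      then obtain i v where e: "e = (visit_pos w v, visit_pos w (Lb i))" "?F i = Some v" by auto
      then have i: "i \<in> {1..m}" and v: "v = relabel_vertex w (parP (i - 1))"
        using phi_val[of i] by (auto split: if_splits)
      have k: "i - 1 < m" "Suc (i - 1) = i" using i by auto
      have "parP (i - 1) \<le> n" using parP[OF k(1)] jh_range[OF C k(1)] by auto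
      then have "visit_pos w v = parP (i - 1)" using P4[OF w_wf] v by auto
      moreover have "visit_pos w (Lb i) = lam!(i - 1)" using pos_w_lam[OF k(1)] k by auto
      ultimately show "e \<in> {(parP k, lam!k) | k. k < m}" using e k by auto
    qed
  next
    show "{(parP k, lam!k) | k. k < m} \<subseteq> {(visit_pos w v, visit_pos w (Lb i)) | i v. ?F i = Some v}"
    proof
      fix e assume "e \<in> {(parP k, lam!k) | k. k < m}"
      then obtain k where e: "e = (parP k, lam!k)" "k < m" by auto
      have "parP k \<le> n" using parP[OF e(2)] jh_range[OF C e(2)] by auto
      then have "visit_pos w (relabel_vertex w (parP k)) = parP k" using P4[OF w_wf] by auto
      moreover have "?F (Suc k) = Some (relabel_vertex w (parP k))" using phi_val[of "Suc k"] e by auto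
      ultimately show "e \<in> {(visit_pos w v, visit_pos w (Lb i)) | i v. ?F i = Some v}"
        using e pos_w_lam[OF e(2)] by (metis (mono_tags, lifting) mem_Collect_eq)
    qed
  qed
  also have "\<dots> = last C"
  proof
    show "{(parP k, lam!k) | k. k < m} \<subseteq> last C" using parP by auto
    show "last C \<subseteq> {(parP k, lam!k) | k. k < m}"
    proof
      fix e assume e: "e \<in> last C"
      obtain x y where xy: "e = (x, y)" by fastforce
      then have "y \<in> set lam" using last_edges[OF C] e by auto
      then obtain k where k: "k < m" "lam!k = y" using jh_length[OF C] by (auto simp: in_set_conv_nth)
      then have "x = parP k" using parP_uniq e xy by auto
      then show "e \<in> {(parP k, lam!k) | k. k < m}" using xy k by auto
    qed
  qed
  finally show ?thesis .
qed

end


lemma inj_chain: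
  assumes C: "C \<in> complete_chains n m" and C': "C' \<in> complete_chains n m"
    and L: "last C = last C'" and W: "inv_pperm n (jh_perm C) = inv_pperm n (jh_perm C')"
  shows "C = C'"
proof -
  have lam: "jh_perm C = jh_perm C'"
  proof (rule nth_equalityI)
    show "length (jh_perm C) = length (jh_perm C')" using jh_length[OF C] jh_length[OF C'] by simp
    fix k assume "k < length (jh_perm C)"
    then have k: "k < m" using jh_length[OF C] by simp
    have a: "jh_perm C ! k - 1 < n" "inv_pperm n (jh_perm C') ! (jh_perm C ! k - 1) = Some (Suc k)"
      using w_lam[OF C k] W by auto
    have "jh_perm C' ! (Suc k - 1) = Suc (jh_perm C ! k - 1)" using w_some[OF C' a] by blast
    moreover have "jh_perm C ! k \<ge> 1" using jh_range[OF C k] by simp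
    ultimately show "jh_perm C ! k = jh_perm C' ! k" by simp
  qed
  show ?thesis
  proof (rule nth_equalityI)
    show "length C = length C'" using chain_basic(1)[OF C] chain_basic(1)[OF C'] by simp
    fix k assume "k < length C"
    then have "k \<le> m" using chain_basic(1)[OF C] by simp
    then show "C!k = C'!k" using chain_C3[OF C] chain_C3[OF C'] L lam by simp
  qed
qed

context
  fixes m n F
  assumes F: "F \<in> ordered_forests m n" and mn: "m \<le> n"
begin

abbreviation "st \<equiv> priority_traversal m n F"

lemma st_good: "good m n F st" using trav_good[OF F mn] .
lemma st_wf: "wf_list m n st" using st_good unfolding good_def by simp

lemma Fv:
  assumes h: "F i = Some v"
  shows "i \<in> {1..m} \<and> valid m n v"
proof -
  have a: "i \<in> {1..m}" using F_dom[OF F mn h] .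
  have b: "v \<in> Rt ` {0..n - m} \<union> Lb ` {1..m}" using F_ran[OF F mn h] .
  from b show ?thesis using a unfolding valid_def by auto
qed

definition Q :: "nat \<Rightarrow> (nat \<times> nat) set" where
  "Q k = {(visit_pos st v, visit_pos st (Lb i)) | i v. F i = Some v \<and> i \<le> k}"

lemma pos_inj:
  assumes i: "i \<in> {1..m}" and i': "i' \<in> {1..m}" and eq: "visit_pos st (Lb i) = visit_pos st (Lb i')"
  shows "i = i'"
proof -
  have v: "valid m n (Lb i)" "valid m n (Lb i')" using i i' unfolding valid_def by simp_all
  have "relabel_vertex st (visit_pos st (Lb i)) = Lb i" using P5[OF st_wf v(1)] by blast
  moreover have "relabel_vertex st (visit_pos st (Lb i')) = Lb i'" using P5[OF st_wf v(2)] by blast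
  ultimately have "Lb i = Lb i'" using eq by metis
  then show ?thesis by simp
qed

lemma Q_pf: "pf_local n (Q k)"
  unfolding pf_local_def
proof (intro conjI allI impI)
  show "Q k \<subseteq> {0..n} \<times> {0..n}"
  proof
    fix e assume "e \<in> Q k"
    then obtain i v where e: "e = (visit_pos st v, visit_pos st (Lb i))" "F i = Some v" unfolding Q_def by blast
    have iv: "i \<in> {1..m}" "valid m n v" using Fv[OF e(2)] by auto
    have vl: "valid m n (Lb i)" using iv(1) unfolding valid_def by simp
    have "visit_pos st v \<le> n" using P5[OF st_wf iv(2)] by blast
    moreover have "visit_pos st (Lb i) \<le> n" using P5[OF st_wf vl] by blast
    ultimately show "e \<in> {0..n} \<times> {0..n}" using e(1) by simp
  qed
  show "\<forall>(a, b)\<in>Q k. a < b"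
  proof
    fix e assume "e \<in> Q k"
    then obtain i v where e: "e = (visit_pos st v, visit_pos st (Lb i))" "F i = Some v" unfolding Q_def by blast
    have iv: "i \<in> {1..m}" "valid m n v" using Fv[OF e(2)] by auto
    have "visit_pos st v < visit_pos st (Lb i)" using P3[OF st_wf st_good e(2) iv(2) iv(1)] by blast
    then show "case e of (a, b) \<Rightarrow> a < b" using e(1) by simp
  qed
  show "a = a'" if hh: "(a, b) \<in> Q k" "(a', b) \<in> Q k" for a a' b
  proof -
    obtain i v where e: "a = visit_pos st v" "b = visit_pos st (Lb i)" "F i = Some v"
      using hh(1) unfolding Q_def by blast
    obtain i' v' where e': "a' = visit_pos st v'" "b = visit_pos st (Lb i')" "F i' = Some v'"
      using hh(2) unfolding Q_def by blast
    have "i \<in> {1..m}" "i' \<in> {1..m}" using Fv[OF e(3)] Fv[OF e'(3)] by auto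
    moreover have "visit_pos st (Lb i) = visit_pos st (Lb i')" using e(2) e'(2) by metis
    ultimately have "i = i'" using pos_inj by blast
    then show ?thesis using e e' by simp
  qed
  show "\<exists>c. (c, x) \<in> Q k" if h: "(a, b) \<in> Q k" "a < x" "x \<le> b" for a b x
  proof -
    obtain i v where e: "a = visit_pos st v" "b = visit_pos st (Lb i)" "F i = Some v" "i \<le> k"
      using h(1) unfolding Q_def by blast
    show ?thesis
    proof (cases "x = b")
      case True then show ?thesis using h(1) by blast
    next
      case False
      then have xb: "x < visit_pos st (Lb i)" using h e by simp
      have iv: "i \<in> {1..m}" "valid m n v" using Fv[OF e(3)] by auto
      obtain i' where i': "st!(x - 1) = Some i'" "i' < i"
        using P3[OF st_wf st_good e(3) iv(2) iv(1)] xb h(2) e(1) by blast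
      have "visit_pos st (Lb i) \<le> n" using P5[OF st_wf, of "Lb i"] iv(1) unfolding valid_def by simp
      then have xn: "x - 1 < n" using xb by simp
      have i'm: "i' \<in> {1..m}" using wl_some[OF st_wf xn i'(1)] .
      then obtain v' where v': "F i' = Some v'" using F_dom2[OF F mn] by blast
      have "visit_pos st (Lb i') = x" using pos_Lb_eq[OF st_wf xn i'(1)] h(2) by simp
      moreover have "i' \<le> k" using i' e(4) by simp
      ultimately have "(visit_pos st v', x) \<in> Q k" using v' unfolding Q_def by blast
      then show ?thesis by blast
    qed
  qed
qed

definition parF :: "nat \<Rightarrow> overt" where "parF i = the (F i)"

lemma parF: "i \<in> {1..m} \<Longrightarrow> F i = Some (parF i)"
  using F_dom2[OF F mn] unfolding parF_def by force

lemma Q0: "Q 0 = {}"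
proof -
  have "\<not> i \<le> 0" if "F i = Some v" for i v using Fv[OF that] by simp
  then show ?thesis unfolding Q_def by blast
qed

lemma Q_Suc:
  assumes k: "k < m"
  shows "Q (Suc k) = insert (visit_pos st (parF (Suc k)), visit_pos st (Lb (Suc k))) (Q k)"
    "(visit_pos st (parF (Suc k)), visit_pos st (Lb (Suc k))) \<notin> Q k"
proof -
  have s: "Suc k \<in> {1..m}" using k by simp
  show "Q (Suc k) = insert (visit_pos st (parF (Suc k)), visit_pos st (Lb (Suc k))) (Q k)"
  proof
    show "Q (Suc k) \<subseteq> insert (visit_pos st (parF (Suc k)), visit_pos st (Lb (Suc k))) (Q k)"
    proof
      fix e assume "e \<in> Q (Suc k)"
      then obtain i v where e: "e = (visit_pos st v, visit_pos st (Lb i))" "F i = Some v" "i \<le> Suc k"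
        unfolding Q_def by blast
      show "e \<in> insert (visit_pos st (parF (Suc k)), visit_pos st (Lb (Suc k))) (Q k)"
      proof (cases "i = Suc k")
        case True then show ?thesis using e parF[OF s] by simp
      next
        case False then have "i \<le> k" using e by simp
        then show ?thesis using e unfolding Q_def by blast
      qed
    qed
    have "(visit_pos st (parF (Suc k)), visit_pos st (Lb (Suc k))) \<in> Q (Suc k)"
      using parF[OF s] unfolding Q_def by blast
    moreover have "Q k \<subseteq> Q (Suc k)"
    proof
      fix e assume "e \<in> Q k"
      then obtain i v where e: "e = (visit_pos st v, visit_pos st (Lb i))" "F i = Some v" "i \<le> k"
        unfolding Q_def by blast
      then have "i \<le> Suc k" by simp
      then show "e \<in> Q (Suc k)" using e unfolding Q_def by blast
    qed
    ultimately show "insert (visit_pos st (parF (Suc k)), visit_pos st (Lb (Suc k))) (Q k) \<subseteq> Q (Suc k)"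
      by blast
  qed
  show "(visit_pos st (parF (Suc k)), visit_pos st (Lb (Suc k))) \<notin> Q k"
  proof
    assume "(visit_pos st (parF (Suc k)), visit_pos st (Lb (Suc k))) \<in> Q k"
    then obtain i v where e: "visit_pos st (Lb (Suc k)) = visit_pos st (Lb i)" "F i = Some v" "i \<le> k"
      unfolding Q_def by blast
    have "i \<in> {1..m}" using Fv[OF e(2)] by simp
    then have "i = Suc k" using pos_inj[OF s _ e(1)] by simp
    then show False using e by simp
  qed
qed

definition CF :: "(nat \<times> nat) set list" where "CF = map Q [0..<Suc m]"

lemma CF_nth: "k \<le> m \<Longrightarrow> CF!k = Q k"
  unfolding CF_def by (simp del: upt_Suc add: nth_map)

lemma CF_len: "length CF = Suc m" unfolding CF_def by simp

lemma CF_chain: "CF \<in> complete_chains n m"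
  unfolding complete_chains_def
proof (intro CollectI conjI ballI allI impI)
  show "length CF = Suc m" by (rule CF_len)
  show "CF!0 = {}" using CF_nth[of 0] Q0 by simp
  fix P assume "P \<in> set CF"
  then obtain k where "P = Q k" unfolding CF_def by auto
  then show "priority_forest n P" using Q_pf pf_iff_local by simp
next
  fix k assume k: "k < m"
  have "pf_cover n (Q k) (Q (Suc k))"
    by (rule single_cover[OF _ _ Q_Suc(2)[OF k] Q_Suc(1)[OF k]]) (simp_all add: Q_pf pf_iff_local)
  then show "pf_cover n (CF!k) (CF!Suc k)" using CF_nth[of k] CF_nth[of "Suc k"] k by simp
qed

lemma CF_jh: "jh_perm CF = map (\<lambda>k. visit_pos st (Lb (Suc k))) [0..<m]"
proof (rule nth_equalityI)
  show "length (jh_perm CF) = length (map (\<lambda>k. visit_pos st (Lb (Suc k))) [0..<m])"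
    using jh_length[OF CF_chain] by simp
  fix k assume "k < length (jh_perm CF)"
  then have k: "k < m" using jh_length[OF CF_chain] by simp
  have "Q (Suc k) - Q k = {(visit_pos st (parF (Suc k)), visit_pos st (Lb (Suc k)))}"
    using Q_Suc[OF k] by blast
  then have "edge_label (Q k) (Q (Suc k)) = visit_pos st (Lb (Suc k))" unfolding edge_label_def by simp
  then show "jh_perm CF ! k = map (\<lambda>k. visit_pos st (Lb (Suc k))) [0..<m] ! k"
    using jh_nth[OF CF_chain k] CF_nth[of k] CF_nth[of "Suc k"] k by simp
qed

lemma CF_last: "last CF = priority_forest_of m n F"
proof -
  have "last CF = Q m" using chain_last[OF CF_chain] CF_nth by simp
  also have "\<dots> = priority_forest_of m n F"
  proof -
    have "i \<le> m" if "F i = Some v" for i v using Fv[OF that] by simp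
    then show ?thesis unfolding Q_def priority_forest_of_def Let_def by blast
  qed
  finally show ?thesis .
qed

lemma CF_w: "inv_pperm n (jh_perm CF) = st"
proof (rule nth_equalityI)
  show "length (inv_pperm n (jh_perm CF)) = length st"
    using w_len[OF CF_chain] wl_len[OF st_wf] by simp
  fix x assume "x < length (inv_pperm n (jh_perm CF))"
  then have x: "x < n" using w_len[OF CF_chain] by simp
  show "inv_pperm n (jh_perm CF) ! x = st ! x"
  proof (cases "st!x")
    case None
    have "Suc x \<notin> set (jh_perm CF)"
    proof
      assume "Suc x \<in> set (jh_perm CF)"
      then obtain k where k: "k < m" "visit_pos st (Lb (Suc k)) = Suc x"
        unfolding CF_jh by auto
      obtain q where q: "q < n" "st!q = Some (Suc k)" "visit_pos st (Lb (Suc k)) = Suc q"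
        using pos_Lb[OF st_wf, of "Suc k"] k by auto
      then show False using k None by simp
    qed
    then show ?thesis using w_nth[OF CF_chain x] None by simp
  next
    case (Some i)
    have i: "i \<in> {1..m}" using wl_some[OF st_wf x Some] .
    have pi: "visit_pos st (Lb i) = Suc x" using pos_Lb_eq[OF st_wf x Some] .
    have k: "i - 1 < m" "Suc (i - 1) = i" using i by auto
    have lk: "jh_perm CF ! (i - 1) = Suc x" unfolding CF_jh using k pi by simp
    have "inv_pperm n (jh_perm CF) ! (jh_perm CF ! (i - 1) - 1) = Some (Suc (i - 1))"
      using w_lam[OF CF_chain k(1)] by blast
    then show ?thesis using lk k Some by simp
  qed
qed

lemma CF_phi: "phi_chain n CF = F"
proof
  fix i
  show "phi_chain n CF i = F i"
  proof (cases "i \<in> {1..m}")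
    case False
    then have "F i = None" using Fv by (cases "F i") auto
    then show ?thesis using phi_val[OF CF_chain, of i] False by simp
  next
    case True
    then have k: "i - 1 < m" "Suc (i - 1) = i" by auto
    have j: "jh_perm CF ! (i - 1) = visit_pos st (Lb i)" unfolding CF_jh using k by simp
    have "(visit_pos st (parF i), visit_pos st (Lb i)) \<in> priority_forest_of m n F"
      unfolding priority_forest_of_def Let_def using parF[OF True] by blast
    then have e: "(visit_pos st (parF i), jh_perm CF ! (i - 1)) \<in> last CF"
      unfolding CF_last j .
    have "valid m n (parF i)" using Fv parF[OF True] by blast
    then have "relabel_vertex st (visit_pos st (parF i)) = parF i" using P5[OF st_wf] by blast
    then show ?thesis using phi_val[OF CF_chain, of i] True parP_uniq[OF CF_chain k(1) e] CF_w parF[OF True]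
      by simp
  qed
qed

lemma surj_forest: "\<exists>C \<in> complete_chains n m. phi_chain n C = F \<and> last C = priority_forest_of m n F
   \<and> inv_pperm n (jh_perm C) = priority_traversal m n F"
  using CF_chain CF_phi CF_last CF_w by blast

end

lemma phi_props:
  assumes C: "C \<in> complete_chains n m"
  shows "phi_chain n C \<in> ordered_forests m n"
    "priority_traversal m n (phi_chain n C) = inv_pperm n (jh_perm C)"
    "priority_forest_of m n (phi_chain n C) = last C"
proof -
  show f: "phi_chain n C \<in> ordered_forests m n" by (rule phi_forest[OF C])
  have mn: "m \<le> n" using wl_cnt[OF w_wf[OF C]] by simp
  show t: "priority_traversal m n (phi_chain n C) = inv_pperm n (jh_perm C)"
    by (rule good_unique[OF trav_good[OF f mn] phi_good[OF C]])
  show "priority_forest_of m n (phi_chain n C) = last C" by (rule phi_pf[OF C t])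
qed

theorem theorem3p4:
  fixes m n :: nat
  assumes "m \<le> n"
  shows "bij_betw (phi_chain n) (complete_chains n m) (ordered_forests m n)
    \<and> (\<forall>C \<in> complete_chains n m.
          priority_forest_of m n (phi_chain n C) = last C
        \<and> priority_traversal m n (phi_chain n C) = inv_pperm n (jh_perm C))
    \<and> (\<forall>\<psi>. bij_betw \<psi> (complete_chains n m) (ordered_forests m n)
          \<and> (\<forall>C \<in> complete_chains n m.
                priority_forest_of m n (\<psi> C) = last C
              \<and> priority_traversal m n (\<psi> C) = inv_pperm n (jh_perm C))
          \<longrightarrow> (\<forall>C \<in> complete_chains n m. \<psi> C = phi_chain n C))"
proof (intro conjI)
  show "bij_betw (phi_chain n) (complete_chains n m) (ordered_forests m n)"
    unfolding bij_betw_def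
  proof
    show "inj_on (phi_chain n) (complete_chains n m)"
    proof (rule inj_onI)
      fix C C' assume C: "C \<in> complete_chains n m" and C': "C' \<in> complete_chains n m"
        and eq: "phi_chain n C = phi_chain n C'"
      have L: "last C = last C'" using phi_props(3)[OF C, symmetric] phi_props(3)[OF C'] eq by simp
      have W: "inv_pperm n (jh_perm C) = inv_pperm n (jh_perm C')"
        using phi_props(2)[OF C, symmetric] phi_props(2)[OF C'] eq by simp
      show "C = C'" by (rule inj_chain[OF C C' L W])
    qed
    show "phi_chain n ` complete_chains n m = ordered_forests m n"
    proof
      show "phi_chain n ` complete_chains n m \<subseteq> ordered_forests m n" using phi_props(1) by blast
      show "ordered_forests m n \<subseteq> phi_chain n ` complete_chains n m"
        using surj_forest[OF _ assms] by blast
    qed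
  qed
  show "\<forall>C \<in> complete_chains n m. priority_forest_of m n (phi_chain n C) = last C
        \<and> priority_traversal m n (phi_chain n C) = inv_pperm n (jh_perm C)"
    using phi_props by blast
  show "\<forall>\<psi>. bij_betw \<psi> (complete_chains n m) (ordered_forests m n)
          \<and> (\<forall>C \<in> complete_chains n m.
                priority_forest_of m n (\<psi> C) = last C
              \<and> priority_traversal m n (\<psi> C) = inv_pperm n (jh_perm C))
          \<longrightarrow> (\<forall>C \<in> complete_chains n m. \<psi> C = phi_chain n C)"
  proof (intro allI impI ballI)
    fix \<psi> C
    assume h: "bij_betw \<psi> (complete_chains n m) (ordered_forests m n)
          \<and> (\<forall>C \<in> complete_chains n m.
                priority_forest_of m n (\<psi> C) = last C
              \<and> priority_traversal m n (\<psi> C) = inv_pperm n (jh_perm C))"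
      and C: "C \<in> complete_chains n m"
    have G: "\<psi> C \<in> ordered_forests m n" using h C bij_betwE by blast
    obtain C' where C': "C' \<in> complete_chains n m" "phi_chain n C' = \<psi> C"
      "last C' = priority_forest_of m n (\<psi> C)" "inv_pperm n (jh_perm C') = priority_traversal m n (\<psi> C)"
      using surj_forest[OF G assms] by blast
    have hC: "priority_forest_of m n (\<psi> C) = last C" "priority_traversal m n (\<psi> C) = inv_pperm n (jh_perm C)"
      using h C by auto
    have "C' = C" by (rule inj_chain[OF C'(1) C]) (simp_all add: C'(3,4) hC)
    then show "\<psi> C = phi_chain n C" using C'(2) by simp
  qed
qed


end
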